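(* Let $A \subset \mathbb{Z}$ be a finite set with $\min A = 0$, $\max A = b$, and $\gcd A = 1$. For $v \in \{0, b\}$ let $T_v(A) = \bigcup_{h \geq 0} h(A - v)$ and $\sigma_v(x) = \sum_{a \in T_v(A)} x^a$. Then both $\sigma_0(x)$ and $\sigma_b(x)$ are rational functions of $x$, and for all integers $h \geq 0$ with $h \geq 2b - 4$, \[ \sigma_{hA}(x) = \sigma_0(x) + x^{hb}\,\sigma_b(x), \] where $\sigma_{hA}(x) = \sum_{a \in hA} x^a$.
   Context: For a finite set $B \subset \mathbb{Z}$ and integer $h \geq 0$, $hB = \{b_1 + \cdots + b_h : b_i \in B\}$, with $0B = \{0\}$, and $A - v = \{a - v : a \in A\}$. Note $T_0(A) \subseteq \mathbb{N}$ so $\sigma_0$ is a formal power series in $x$, while $T_b(A) \subseteq -\mathbb{N}$ so $\sigma_b$ is a formal power series in $x^{-1}$; "rational function" means these series are expansions of rational functions in $x$, and the displayed identity is an identity of rational functions. Here $\mathbb{N} = \{0,1,2,\ldots\}$. *)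

theory Defs
  imports "HOL-Computational_Algebra.Computational_Algebra"
begin

fun sumset :: "nat \<Rightarrow> int set \<Rightarrow> int set" where
  "sumset 0 B = {0}"
| "sumset (Suc h) B = {s + c | s c. s \<in> sumset h B \<and> c \<in> B}"

definition Tset :: "int set \<Rightarrow> int \<Rightarrow> int set" where
  "Tset A v = (\<Union>h. sumset h ((\<lambda>a. a - v) ` A))"

definition sigma0_fps :: "int set \<Rightarrow> complex fps" where
  "sigma0_fps A = Abs_fps (\<lambda>n. if int n \<in> Tset A 0 then 1 else 0)"

(* sigma_b as a formal power series in y = x^{-1}: coefficient n is 1 iff -n \<in> T_b(A) *)
definition sigmab_fps :: "int set \<Rightarrow> int \<Rightarrow> complex fps" where
  "sigmab_fps A b = Abs_fps (\<lambda>n. if - int n \<in> Tset A b then 1 else 0)"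

definition expands_rational :: "complex fps \<Rightarrow> complex poly \<Rightarrow> complex poly \<Rightarrow> bool" where
  "expands_rational S p q \<longleftrightarrow> coeff q 0 \<noteq> 0 \<and> fps_of_poly q * S = fps_of_poly p"

definition sigma_set :: "int set \<Rightarrow> complex \<Rightarrow> complex" where
  "sigma_set S x = (\<Sum>a\<in>S. x powi a)"

end

theory Submission
  imports Defs
begin
definition SG :: "int set \<Rightarrow> int set" where
  "SG B = {sum_list xs | xs. set xs \<subseteq> B}"

lemma sumset_list: "sumset h B = {sum_list xs | xs. length xs = h \<and> set xs \<subseteq> B}"
proof (induction h)
  case 0
  then show ?case by auto
next
  case (Suc h)
  show ?case
  proof (rule set_eqI, rule iffI)
    fix y assume "y \<in> sumset (Suc h) B"
    then obtain s c where "y = s + c" "s \<in> sumset h B" "c \<in> B" by auto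
    then obtain xs where "s = sum_list xs" "length xs = h" "set xs \<subseteq> B" using Suc by auto
    then show "y \<in> {sum_list xs | xs. length xs = Suc h \<and> set xs \<subseteq> B}"
      using \<open>y = s + c\<close> \<open>c \<in> B\<close>
      by (intro CollectI exI[of _ "c # xs"]) auto
  next
    fix y assume "y \<in> {sum_list xs | xs. length xs = Suc h \<and> set xs \<subseteq> B}"
    then obtain xs where xs: "y = sum_list xs" "length xs = Suc h" "set xs \<subseteq> B" by auto
    then obtain c ys where "xs = c # ys" by (cases xs) auto
    then have "sum_list ys \<in> sumset h B" using Suc xs by auto
    then show "y \<in> sumset (Suc h) B" using xs \<open>xs = c # ys\<close> by simp (metis add.commute)
  qed
qed

lemma sumset_uminus: "sumset h (uminus ` B) = uminus ` sumset h B"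
proof -
  have "sumset h (uminus ` B) = {sum_list xs | xs. length xs = h \<and> set xs \<subseteq> uminus ` B}"
    by (rule sumset_list)
  also have "\<dots> = uminus ` {sum_list xs | xs. length xs = h \<and> set xs \<subseteq> B}"
  proof (rule set_eqI, rule iffI)
    fix y assume "y \<in> {sum_list xs | xs. length xs = h \<and> set xs \<subseteq> uminus ` B}"
    then obtain xs where xs: "y = sum_list xs" "length xs = h" "set xs \<subseteq> uminus ` B" by auto
    have "sum_list (map uminus xs) = - sum_list xs" by (induction xs) auto
    moreover have "set (map uminus xs) \<subseteq> B" using xs(3) by auto
    ultimately have "y = - sum_list (map uminus xs)" "sum_list (map uminus xs) \<in> {sum_list xs | xs. length xs = h \<and> set xs \<subseteq> B}"
      using xs by (simp, intro CollectI exI[of _ "map uminus xs"], simp)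
    then show "y \<in> uminus ` {sum_list xs | xs. length xs = h \<and> set xs \<subseteq> B}" by blast
  next
    fix y assume "y \<in> uminus ` {sum_list xs | xs. length xs = h \<and> set xs \<subseteq> B}"
    then obtain xs where xs: "y = - sum_list xs" "length xs = h" "set xs \<subseteq> B" by auto
    have "sum_list (map uminus xs) = - sum_list xs" by (induction xs) auto
    then show "y \<in> {sum_list xs | xs. length xs = h \<and> set xs \<subseteq> uminus ` B}"
      using xs by (intro CollectI exI[of _ "map uminus xs"]) auto
  qed
  finally show ?thesis by (simp add: sumset_list)
qed

lemma Tset0: "Tset B 0 = SG B"
  unfolding Tset_def SG_def by (auto simp: sumset_list)

lemma Tsetb: "(- n \<in> Tset A b) \<longleftrightarrow> n \<in> SG ((\<lambda>a. b - a) ` A)"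
proof -
  have "(\<lambda>a. a - b) ` A = uminus ` ((\<lambda>a. b - a) ` A)" by (auto simp: image_image)
  then have "Tset A b = uminus ` Tset ((\<lambda>a. b - a) ` A) 0"
    unfolding Tset_def by (auto simp: sumset_uminus)
  then show ?thesis by (auto simp: Tset0)
qed

lemma SG_add: "x \<in> SG B \<Longrightarrow> y \<in> SG B \<Longrightarrow> x + y \<in> SG B"
  unfolding SG_def by clarsimp (metis set_append sum_list_append Un_subset_iff)

lemma SG_mem: "x \<in> B \<Longrightarrow> x \<in> SG B"
  unfolding SG_def by (intro CollectI exI[of _ "[x]"]) auto

lemma SG_0: "0 \<in> SG B"
  unfolding SG_def by (intro CollectI exI[of _ "[]"]) auto

lemma SG_nat_mult: "x \<in> SG B \<Longrightarrow> int k * x \<in> SG B"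
  by (induction k) (auto simp: SG_0 distrib_right SG_add)

lemma sum_list_pos_bound:
  fixes zs :: "int list"
  assumes "set zs \<subseteq> {0<..<b}"
  shows "int (length zs) \<le> sum_list zs \<and> sum_list zs \<le> int (length zs) * (b - 1)"
  using assms by (induction zs) (auto simp: algebra_simps)

lemma reduce_interior:
  fixes b :: int
  assumes "b > 0"
  shows "set ys \<subseteq> {0<..<b} \<Longrightarrow> \<exists>m js. set js \<subseteq> set ys \<and> int (length js) \<le> b - 1 \<and>
            m + length js \<le> length ys \<and> sum_list ys = int m * b + sum_list js"
proof (induction "length ys" arbitrary: ys rule: less_induct)
  case less
  show ?case
  proof (cases "int (length ys) \<le> b - 1")
    case True
    then show ?thesis by (intro exI[of _ 0] exI[of _ ys]) auto
  next
    case False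
    define bn where "bn = nat b"
    have bn: "int bn = b" using assms by (simp add: bn_def)
    have len: "bn \<le> length ys" using False bn by linarith
    define f where "f i = sum_list (take i ys) mod b" for i
    have "f ` {0..bn} \<subseteq> {0..<b}" using assms by (auto simp: f_def)
    have "\<not> inj_on f {0..bn}"
    proof
      assume "inj_on f {0..bn}"
      then have "card (f ` {0..bn}) = Suc bn" by (simp add: card_image)
      moreover have "card (f ` {0..bn}) \<le> card {0..<b}"
        using \<open>f ` {0..bn} \<subseteq> {0..<b}\<close> by (intro card_mono) auto
      ultimately show False using bn by simp
    qed
    then obtain i j where ij: "i \<in> {0..bn}" "j \<in> {0..bn}" "i \<noteq> j" "f i = f j"
      unfolding inj_on_def by blast
    then obtain i j where ij: "i < j" "j \<le> bn" "f i = f j"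
      by (metis atLeastAtMost_iff linorder_neqE_nat)
    define blk where "blk = take (j - i) (drop i ys)"
    define rest where "rest = take i ys @ drop j ys"
    have tj: "take j ys = take i ys @ blk"
      unfolding blk_def using ij by (metis le_add_diff_inverse less_imp_le_nat take_add)
    have sumys: "sum_list ys = sum_list rest + sum_list blk"
    proof -
      have "ys = take j ys @ drop j ys" by simp
      then have "sum_list ys = sum_list (take i ys) + sum_list blk + sum_list (drop j ys)"
        by (metis sum_list_append tj)
      then show ?thesis unfolding rest_def by simp
    qed
    have lenblk: "length blk = j - i" unfolding blk_def using ij len by auto
    have lenrest: "length rest + (j - i) = length ys" unfolding rest_def using ij len by auto
    have setblk: "set blk \<subseteq> {0<..<b}" using less.prems unfolding blk_def
      by (meson in_set_dropD in_set_takeD subset_iff)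
    have setrest: "set rest \<subseteq> set ys" unfolding rest_def
      by (auto dest: in_set_takeD in_set_dropD)
    have "b dvd sum_list blk"
    proof -
      have "sum_list (take j ys) = sum_list (take i ys) + sum_list blk" by (simp add: tj)
      then have "(sum_list (take i ys) + sum_list blk) mod b = sum_list (take i ys) mod b"
        using ij(3) by (simp add: f_def)
      then show ?thesis by (metis mod_eq_dvd_iff add_diff_cancel_left')
    qed
    then obtain k where k: "sum_list blk = b * k" by blast
    have bds: "int (length blk) \<le> sum_list blk \<and> sum_list blk \<le> int (length blk) * (b - 1)"
      by (rule sum_list_pos_bound[OF setblk])
    have "length blk > 0" using lenblk ij by simp
    then have "b * k > 0" using bds k by linarith
    then have k1: "k \<ge> 1" using assms by (simp add: zero_less_mult_iff)
    have k2: "k < int (length blk)"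
    proof -
      have "int (length blk) * (b - 1) < b * int (length blk)" using \<open>length blk > 0\<close>
        by (simp add: algebra_simps)
      then have "b * k < b * int (length blk)" using bds k by linarith
      then show ?thesis using assms by simp
    qed
    have "length rest < length ys" using lenrest ij by simp
    moreover have "set rest \<subseteq> {0<..<b}" using setrest less.prems by auto
    ultimately obtain m js where mjs: "set js \<subseteq> set rest" "int (length js) \<le> b - 1"
        "m + length js \<le> length rest" "sum_list rest = int m * b + sum_list js"
      using less.hyps by blast
    show ?thesis
    proof (intro exI[of _ "m + nat k"] exI[of _ js] conjI)
      show "set js \<subseteq> set ys" using mjs setrest by auto
      show "int (length js) \<le> b - 1" by (fact mjs(2))
      show "m + nat k + length js \<le> length ys" using mjs(3) lenrest lenblk k1 k2 by linarith
      show "sum_list ys = int (m + nat k) * b + sum_list js"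
        using sumys mjs(4) k k1 by (simp add: algebra_simps)
    qed
  qed
qed

lemma sum_split:
  fixes b :: int
  shows "set xs \<subseteq> {0..b} \<Longrightarrow> sum_list xs = sum_list (filter (\<lambda>a. 0 < a \<and> a < b) xs)
           + int (length (filter (\<lambda>a. a = b) xs)) * b"
  by (induction xs) (auto simp: algebra_simps)

lemma SG_rep:
  fixes b :: int
  assumes "B \<subseteq> {0..b}" "b > 0" "n \<in> SG B"
  shows "\<exists>m js. set js \<subseteq> B \<inter> {0<..<b} \<and> int (length js) \<le> b - 1 \<and> n = int m * b + sum_list js"
proof -
  obtain xs where xs: "n = sum_list xs" "set xs \<subseteq> B" using assms(3) unfolding SG_def by auto
  define ys where "ys = filter (\<lambda>a. 0 < a \<and> a < b) xs"
  define c where "c = length (filter (\<lambda>a. a = b) xs)"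
  have n: "n = sum_list ys + int c * b" unfolding ys_def c_def xs(1)
    by (rule sum_split) (use xs(2) assms(1) in auto)
  have ys: "set ys \<subseteq> B \<inter> {0<..<b}" unfolding ys_def using xs(2) by auto
  then obtain m js where mjs: "set js \<subseteq> set ys" "int (length js) \<le> b - 1"
     "sum_list ys = int m * b + sum_list js"
    using reduce_interior[OF assms(2), of ys] by auto
  show ?thesis
    by (intro exI[of _ "m + c"] exI[of _ js]) (use mjs ys n in \<open>auto simp: algebra_simps\<close>)
qed

lemma sumset_rep:
  fixes b :: int
  assumes "b \<in> B" "set js \<subseteq> B"
  shows "int m * b + sum_list js \<in> sumset (m + length js) B"
proof -
  have "sum_list (replicate m b @ js) = int m * b + sum_list js" by (simp add: sum_list_replicate)
  then show ?thesis unfolding sumset_list using assms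
    by (intro CollectI exI[of _ "replicate m b @ js"]) auto
qed

lemma sumset_pad:
  assumes "0 \<in> B" "p \<le> h" "x \<in> sumset p B"
  shows "x \<in> sumset h B"
proof -
  obtain xs where xs: "x = sum_list xs" "length xs = p" "set xs \<subseteq> B"
    using assms(3) unfolding sumset_list by auto
  have "sum_list (xs @ replicate (h - p) 0) = x" using xs by (simp add: sum_list_replicate)
  then show ?thesis unfolding sumset_list using assms xs
    by (intro CollectI exI[of _ "xs @ replicate (h - p) 0"]) auto
qed

lemma sumset_SG: "x \<in> sumset h B \<Longrightarrow> x \<in> SG B"
  unfolding sumset_list SG_def by auto

lemma Gcd_ideal:
  fixes I :: "int set"
  assumes "0 \<in> I" "\<And>x y. x \<in> I \<Longrightarrow> y \<in> I \<Longrightarrow> x + y \<in> I"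
    "\<And>x u. x \<in> I \<Longrightarrow> u * x \<in> I"
  shows "finite C \<Longrightarrow> C \<subseteq> I \<Longrightarrow> Gcd C \<in> I"
proof (induction C rule: finite_induct)
  case empty
  then show ?case using assms by simp
next
  case (insert a C)
  obtain u v where "u * a + v * Gcd C = gcd a (Gcd C)" using bezout_int by blast
  moreover have "u * a \<in> I" "v * Gcd C \<in> I" using insert assms by auto
  ultimately show ?case using assms(2) by (metis Gcd_insert)
qed

lemma residue_exists:
  fixes b :: int
  assumes "finite B" "Gcd B = 1" "b > 0"
  shows "\<exists>s \<in> SG B. s mod b = r mod b"
proof -
  define I where "I = {x. \<exists>s \<in> SG B. s mod b = x mod b}"
  have "0 \<in> I" unfolding I_def using SG_0[of B] by force
  moreover have "x + y \<in> I" if hxy: "x \<in> I" "y \<in> I" for x y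
  proof -
    obtain s t where "s \<in> SG B" "t \<in> SG B" "s mod b = x mod b" "t mod b = y mod b"
      using hxy unfolding I_def mem_Collect_eq by blast
    then show ?thesis unfolding I_def
      by (intro CollectI bexI[of _ "s + t"]) (auto intro: SG_add mod_add_cong)
  qed
  moreover have "u * x \<in> I" if hx: "x \<in> I" for x u
  proof -
    obtain s where s: "s \<in> SG B" "s mod b = x mod b" using hx unfolding I_def by auto
    have "int (nat (u mod b)) = u mod b" using assms(3) by simp
    then have "(int (nat (u mod b)) * s) mod b = (u * x) mod b"
      by (metis s(2) mod_mod_trivial mod_mult_cong)
    then show ?thesis unfolding I_def using SG_nat_mult[OF s(1)] by blast
  qed
  moreover have "B \<subseteq> I" unfolding I_def using SG_mem by auto
  ultimately have "Gcd B \<in> I" using Gcd_ideal[of I B] assms(1) by blast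
  then have "1 \<in> I" using assms(2) by simp
  then have "r * 1 \<in> I" using \<open>\<And>x u. x \<in> I \<Longrightarrow> u * x \<in> I\<close> by blast
  then show ?thesis unfolding I_def by simp
qed

lemma small_residue:
  fixes b :: int
  assumes "finite B" "Gcd B = 1" "b > 0" "B \<subseteq> {0..b}"
  shows "\<exists>s \<in> SG B. s mod b = r mod b \<and> 0 \<le> s \<and> s \<le> (b - 1) * (b - 1)"
proof -
  obtain s where s: "s \<in> SG B" "s mod b = r mod b" using residue_exists[OF assms(1-3)] by blast
  obtain m js where mjs: "set js \<subseteq> B \<inter> {0<..<b}" "int (length js) \<le> b - 1"
    "s = int m * b + sum_list js"
    using SG_rep[OF assms(4,3) s(1)] by blast
  have bd: "int (length js) \<le> sum_list js \<and> sum_list js \<le> int (length js) * (b - 1)"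
    by (rule sum_list_pos_bound) (use mjs in auto)
  have "int (length js) * (b - 1) \<le> (b - 1) * (b - 1)"
    using mjs(2) assms(3) by (simp add: mult_right_mono)
  moreover have "sum_list js \<in> SG B" using mjs(1) unfolding SG_def by auto
  moreover have "sum_list js mod b = r mod b" using s(2) mjs(3) by (metis mod_mult_self3)
  ultimately show ?thesis using bd by (intro bexI[of _ "sum_list js"]) auto
qed

lemma SG_large:
  fixes b :: int
  assumes "finite B" "Gcd B = 1" "b > 0" "B \<subseteq> {0..b}" "b \<in> B"
    "n \<ge> s" "s \<in> SG B" "s mod b = n mod b"
  shows "n \<in> SG B"
proof -
  have "b dvd (n - s)" using assms(8) by (metis mod_eq_dvd_iff)
  then obtain k where k: "n - s = b * k" by blast
  have "k \<ge> 0" using k assms(3,6) by (smt (verit) mult_pos_neg)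
  have "int (nat k) * b \<in> SG B" by (rule SG_nat_mult[OF SG_mem[OF assms(5)]])
  then have "s + int (nat k) * b \<in> SG B" using assms(7) SG_add by blast
  then show ?thesis using k \<open>k \<ge> 0\<close> by (simp add: algebra_simps)
qed

lemma sum_list_reflect: "sum_list (map (\<lambda>a. b - a) xs) = int (length xs) * (b::int) - sum_list xs"
  by (induction xs) (auto simp: algebra_simps)

lemma sumset_reflect:
  assumes "x \<in> sumset h ((\<lambda>a. b - a) ` A)"
  shows "int h * b - x \<in> sumset h A"
proof -
  obtain zs where zs: "x = sum_list zs" "length zs = h" "set zs \<subseteq> (\<lambda>a. b - a) ` A"
    using assms unfolding sumset_list by auto
  have "set (map (\<lambda>a. b - a) zs) \<subseteq> A" using zs(3) by auto
  moreover have "sum_list (map (\<lambda>a. b - a) zs) = int h * b - x" using zs by (simp add: sum_list_reflect)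
  ultimately show ?thesis unfolding sumset_list using zs(2)
    by (intro CollectI exI[of _ "map (\<lambda>a. b - a) zs"]) auto
qed

lemma sumset_to_reflect:
  assumes "x \<in> sumset h A"
  shows "int h * b - x \<in> SG ((\<lambda>a. b - a) ` A)"
proof -
  obtain xs where xs: "x = sum_list xs" "length xs = h" "set xs \<subseteq> A"
    using assms unfolding sumset_list by auto
  have "sum_list (map (\<lambda>a. b - a) xs) = int h * b - x" using xs by (simp add: sum_list_reflect)
  then show ?thesis unfolding SG_def using xs(3)
    by (intro CollectI exI[of _ "map (\<lambda>a. b - a) xs"]) auto
qed

lemma inclusion:
  fixes b :: int and h :: nat
  assumes fin: "finite A" and sub: "A \<subseteq> {0..b}" and A0: "0 \<in> A" and Ab: "b \<in> A" and bpos: "b > 0"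
    and hb: "int h \<ge> 2 * b - 4"
    and n1: "n \<in> SG A" and n2: "int h * b - n \<in> SG ((\<lambda>a. b - a) ` A)"
  shows "n \<in> sumset h A"
proof -
  define A' where "A' = (\<lambda>a. b - a) ` A"
  have sub': "A' \<subseteq> {0..b}" using sub unfolding A'_def by auto
  have A'0: "0 \<in> A'" "b \<in> A'" using A0 Ab unfolding A'_def by force+
  obtain m js where mjs: "set js \<subseteq> A \<inter> {0<..<b}" "int (length js) \<le> b - 1"
    "n = int m * b + sum_list js" using SG_rep[OF sub bpos n1] by blast
  obtain m' js' where mjs': "set js' \<subseteq> A' \<inter> {0<..<b}" "int (length js') \<le> b - 1"
    "int h * b - n = int m' * b + sum_list js'" using SG_rep[OF sub' bpos] n2 unfolding A'_def by blast
  have R: "int (length js) \<le> sum_list js" using sum_list_pos_bound[of js b] mjs(1) by auto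
  have R': "int (length js') \<le> sum_list js'" using sum_list_pos_bound[of js' b] mjs'(1) by auto
  show ?thesis
  proof (cases "m + length js \<le> h")
    case True
    have "n \<in> sumset (m + length js) A" using sumset_rep[OF Ab, of js m] mjs by auto
    then show ?thesis using sumset_pad[OF A0 True] by blast
  next
    case F1: False
    show ?thesis
    proof (cases "m' + length js' \<le> h")
      case True
      have "int h * b - n \<in> sumset (m' + length js') A'" using sumset_rep[OF A'0(2), of js' m'] mjs' by auto
      then have "int h * b - n \<in> sumset h A'" using sumset_pad[OF A'0(1) True] by blast
      then have "int h * b - (int h * b - n) \<in> sumset h A" using sumset_reflect unfolding A'_def by blast
      then show ?thesis by simp
    next
      case F2: False
      define j where "j = int (length js)"
      define j' where "j' = int (length js')"
      have e: "int h * b = (int m + int m') * b + sum_list js + sum_list js'"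
        using mjs(3) mjs'(3) by (simp add: algebra_simps)
      have "int m \<ge> int h + 1 - j" "int m' \<ge> int h + 1 - j'" using F1 F2 unfolding j_def j'_def by auto
      then have "(int m + int m') * b \<ge> (2 * int h + 2 - j - j') * b"
        using bpos by (intro mult_right_mono) auto
      then have "(j + j' - int h - 2) * b \<ge> j + j'" using e R R' unfolding j_def j'_def
        by (simp add: algebra_simps)
      moreover have "j + j' - int h - 2 \<le> 0" using mjs(2) mjs'(2) hb unfolding j_def j'_def by linarith
      moreover have "j \<ge> 0" "j' \<ge> 0" unfolding j_def j'_def by auto
      moreover have "(j + j' - int h - 2) * b \<le> 0"
        using \<open>j + j' - int h - 2 \<le> 0\<close> bpos by (intro mult_nonpos_nonneg) auto
      ultimately have "j + j' - int h - 2 < 0" by linarith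
      then have "(j + j' - int h - 2) * b < 0" using bpos by (intro mult_neg_pos)
      then show ?thesis using \<open>(j + j' - int h - 2) * b \<ge> j + j'\<close> \<open>j \<ge> 0\<close> \<open>j' \<ge> 0\<close> by linarith
    qed
  qed
qed

lemma cover:
  fixes b :: int and h :: nat
  assumes fin: "finite A" and sub: "A \<subseteq> {0..b}" and A0: "0 \<in> A" and Ab: "b \<in> A" and bpos: "b > 0"
    and g: "Gcd A = 1" and g': "Gcd ((\<lambda>a. b - a) ` A) = 1"
    and hb: "int h \<ge> 2 * b - 4"
  shows "n \<in> SG A \<or> int h * b - n \<in> SG ((\<lambda>a. b - a) ` A)"
proof (rule ccontr)
  assume H: "\<not> ?thesis"
  define A' where "A' = (\<lambda>a. b - a) ` A"
  have sub': "A' \<subseteq> {0..b}" using sub unfolding A'_def by auto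
  have A'0: "0 \<in> A'" "b \<in> A'" using A0 Ab unfolding A'_def by force+
  have fin': "finite A'" using fin unfolding A'_def by simp
  obtain s where s: "s \<in> SG A" "s mod b = n mod b" "s \<le> (b - 1) * (b - 1)"
    using small_residue[OF fin g bpos sub, of n] by blast
  obtain s' where s': "s' \<in> SG A'" "s' mod b = (int h * b - n) mod b" "s' \<le> (b - 1) * (b - 1)"
    using small_residue[OF fin' g'[folded A'_def] bpos sub', of "int h * b - n"] by blast
  have "\<not> n \<ge> s" using SG_large[OF fin g bpos sub Ab _ s(1) s(2)] H by blast
  moreover have "b dvd s - n" using s(2) by (metis mod_eq_dvd_iff)
  ultimately have n: "n \<le> s - b" using zdvd_imp_le[of b "s - n"] by linarith
  have "\<not> int h * b - n \<ge> s'" using SG_large[OF fin' g'[folded A'_def] bpos sub' A'0(2) _ s'(1) s'(2)] H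
    unfolding A'_def by blast
  moreover have "b dvd s' - (int h * b - n)" using s'(2) by (metis mod_eq_dvd_iff)
  ultimately have n': "int h * b - n \<le> s' - b" using zdvd_imp_le[of b "s' - (int h * b - n)"] by linarith
  have "(2 * b - 4) * b \<le> int h * b" using hb bpos by (intro mult_right_mono) auto
  then have "(2 * b - 4) * b \<le> 2 * ((b - 1) * (b - 1)) - 2 * b" using n n' s(3) s'(3) by linarith
  then have "b \<le> 1" by (simp add: algebra_simps)
  then have "b = 1" using bpos by simp
  then show False using n n' s(3) s'(3) by simp
qed

definition Pp :: "int set \<Rightarrow> nat \<Rightarrow> complex poly" where
  "Pp U N = (\<Sum>k<N. if int k \<in> U then monom 1 k else 0)"

definition pnum :: "int set \<Rightarrow> nat \<Rightarrow> complex poly" where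
  "pnum U N = Pp U N * [:1, -1:] + monom 1 N"

lemma coeff_Pp: "coeff (Pp U N) n = (if n < N \<and> int n \<in> U then 1 else 0)"
proof -
  have "Pp U N = (\<Sum>k<N. monom (if int k \<in> U then 1 else 0) k)"
    unfolding Pp_def by (intro sum.cong) auto
  then show ?thesis by (simp add: coeff_sum coeff_monom)
qed

lemma poly_Pp: "poly (Pp U N) x = (\<Sum>k<N. if int k \<in> U then x ^ k else 0)"
  unfolding Pp_def by (auto simp: poly_sum poly_monom intro: sum.cong)

lemma expands_gen:
  assumes large: "\<And>k. k \<ge> N \<Longrightarrow> int k \<in> U"
  shows "expands_rational (Abs_fps (\<lambda>n. if int n \<in> U then 1 else 0)) (pnum U N) [:1, -1:]"
  unfolding expands_rational_def
proof
  show "coeff [:1, -1:] 0 \<noteq> (0::complex)" by simp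
  define F where "F = Abs_fps (\<lambda>n. if int n \<in> U then 1 else (0::complex))"
  have q: "fps_of_poly [:1, -1:] = (1 - fps_X :: complex fps)"
    by (simp add: fps_of_poly_pCons)
  have p: "fps_of_poly (pnum U N) = fps_of_poly (Pp U N) - fps_X * fps_of_poly (Pp U N) + fps_X ^ N"
    unfolding pnum_def by (simp add: fps_of_poly_add fps_of_poly_mult fps_of_poly_pCons fps_of_poly_monom' algebra_simps)
  show "fps_of_poly [:1, -1:] * F = fps_of_poly (pnum U N)"
  proof (rule fps_ext)
    fix n
    have l: "(fps_of_poly [:1, -1:] * F) $ n = F $ n - (if n = 0 then 0 else F $ (n - 1))"
      unfolding q by (simp add: algebra_simps fps_X_mult_nth)
    have r: "fps_of_poly (pnum U N) $ n = coeff (Pp U N) n - (if n = 0 then 0 else coeff (Pp U N) (n - 1))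
              + (if n = N then 1 else 0)"
      unfolding p by (simp add: fps_X_mult_nth fps_X_power_nth)
    show "(fps_of_poly [:1, -1:] * F) $ n = fps_of_poly (pnum U N) $ n"
      unfolding l r unfolding F_def using large
      by (cases "n < N"; cases "n = N"; cases n) (auto simp: coeff_Pp, metis Suc_leI le_neq_implies_less not_le of_nat_Suc)
  qed
qed

lemma eval_gen:
  fixes x :: complex
  assumes large: "\<And>k. k \<ge> N \<Longrightarrow> int k \<in> U" and x1: "x \<noteq> 1" and T: "N \<le> T"
  shows "poly (pnum U N) x / poly [:1, -1:] x
           = (\<Sum>k\<le>T. if int k \<in> U then x ^ k else 0) + x ^ Suc T / (1 - x)"
proof -
  have nz: "1 - x \<noteq> 0" using x1 by simp
  have lhs: "poly (pnum U N) x / poly [:1, -1:] x = poly (Pp U N) x + x ^ N / (1 - x)"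
    unfolding pnum_def using nz by (simp add: field_simps poly_monom)
  have split: "{..T} = {..<N} \<union> {N..T}" using T by auto
  have "(\<Sum>k\<le>T. if int k \<in> U then x ^ k else 0)
      = (\<Sum>k<N. if int k \<in> U then x ^ k else 0) + (\<Sum>k=N..T. if int k \<in> U then x ^ k else 0)"
    unfolding split by (rule sum.union_disjoint) auto
  also have "(\<Sum>k=N..T. if int k \<in> U then x ^ k else 0) = (\<Sum>k=N..T. x ^ k)"
    using large by (intro sum.cong) auto
  also have "\<dots> = (x ^ N - x ^ Suc T) / (1 - x)" using T x1 by (simp add: sum_gp)
  finally show ?thesis unfolding lhs poly_Pp using nz
    by (simp add: field_simps)
qed

lemma sum_nat_to_int:
  fixes g :: "int \<Rightarrow> 'a::comm_monoid_add"
  shows "(\<Sum>k\<le>T. g (int k)) = (\<Sum>n\<in>{0..int T}. g n)"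
  by (rule sum.reindex_bij_witness[where i = "\<lambda>n. nat n" and j = int]) auto

lemma geom_powi:
  fixes x :: complex
  assumes "x \<noteq> 0" "x \<noteq> 1"
  shows "(\<Sum>n\<in>{a..a + int d - 1}. x powi n) = (x powi a - x powi (a + int d)) / (1 - x)"
proof (induction d)
  case 0
  then show ?case by simp
next
  case (Suc d)
  have "{a..a + int (Suc d) - 1} = insert (a + int d) {a..a + int d - 1}" by auto
  then have "(\<Sum>n\<in>{a..a + int (Suc d) - 1}. x powi n) = x powi (a + int d) + (\<Sum>n\<in>{a..a + int d - 1}. x powi n)"
    by simp
  also have "\<dots> = x powi (a + int d) + (x powi a - x powi (a + int d)) / (1 - x)" using Suc by simp
  also have "x powi (a + int (Suc d)) = x powi (a + int d) * x"
  proof -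
    have e: "a + int (Suc d) = (a + int d) + 1" by simp
    show ?thesis unfolding e by (rule power_int_add_1) (use assms(1) in simp)
  qed
  moreover have "1 - x \<noteq> 0" using assms(2) by simp
  ultimately show ?case by (simp add: field_simps)
qed

lemma SG_nonneg:
  fixes b :: int
  assumes "B \<subseteq> {0..b}" "x \<in> SG B"
  shows "x \<ge> 0"
proof -
  obtain xs where "x = sum_list xs" "set xs \<subseteq> B" using assms(2) unfolding SG_def by auto
  then show ?thesis using assms(1) by (auto intro!: sum_list_nonneg)
qed

lemma sumset_bounds:
  fixes b :: int
  assumes "B \<subseteq> {0..b}" "x \<in> sumset h B"
  shows "0 \<le> x \<and> x \<le> int h * b"
proof -
  obtain xs where xs: "x = sum_list xs" "length xs = h" "set xs \<subseteq> B"
    using assms(2) unfolding sumset_list by auto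
  have "set xs \<subseteq> {0..b} \<Longrightarrow> 0 \<le> sum_list xs \<and> sum_list xs \<le> int (length xs) * b"
    by (induction xs) (auto simp: algebra_simps)
  then show ?thesis using xs assms(1) by auto
qed

theorem theorem5p1:
  fixes A :: "int set" and b :: int
  assumes "finite A" and "A \<noteq> {}" and "Min A = 0" and "Max A = b" and "Gcd A = 1"
  shows "\<exists>p0 q0 pb qb.
           expands_rational (sigma0_fps A) p0 q0 \<and>
           expands_rational (sigmab_fps A b) pb qb \<and>
           (\<forall>h::nat. int h \<ge> 2 * b - 4 \<longrightarrow>
              (\<forall>x::complex. x \<noteq> 0 \<and> poly q0 x \<noteq> 0 \<and> poly qb (inverse x) \<noteq> 0 \<longrightarrow>
                 sigma_set (sumset h A) x
                   = poly p0 x / poly q0 x + x powi (int h * b) * (poly pb (inverse x) / poly qb (inverse x))))"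
proof -
  note fin = assms(1)
  have A0: "0 \<in> A" using Min_in[OF assms(1,2)] assms(3) by simp
  have Ab: "b \<in> A" using Max_in[OF assms(1,2)] assms(4) by simp
  have sub: "A \<subseteq> {0..b}"
  proof
    fix a assume "a \<in> A"
    then show "a \<in> {0..b}" using Min_le[OF assms(1)] Max_ge[OF assms(1)] assms(3,4) by fastforce
  qed
  have bpos: "b > 0"
  proof (rule ccontr)
    assume "\<not> b > 0"
    then have "b = 0" using Ab sub by auto
    then have "A = {0}" using sub A0 by auto
    then show False using assms(5) by simp
  qed
  define A' where "A' = (\<lambda>a. b - a) ` A"
  have sub': "A' \<subseteq> {0..b}" using sub unfolding A'_def by auto
  have A'0: "0 \<in> A'" "b \<in> A'" using A0 Ab unfolding A'_def by force+
  have fin': "finite A'" using fin unfolding A'_def by simp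
  have g': "Gcd A' = 1"
  proof -
    have "Gcd A' dvd a" if "a \<in> A" for a
    proof -
      have "Gcd A' dvd b" using A'0(2) by (rule Gcd_dvd)
      moreover have "Gcd A' dvd b - a" using that unfolding A'_def by (intro Gcd_dvd) auto
      ultimately have "Gcd A' dvd b - (b - a)" by (rule dvd_diff)
      then show ?thesis by simp
    qed
    then have "Gcd A' dvd Gcd A" by (rule Gcd_greatest)
    then have "\<bar>Gcd A'\<bar> = 1" using assms(5) by simp
    then show ?thesis by simp
  qed
  define S where "S = SG A"
  define S' where "S' = SG A'"
  define N where "N = nat ((b - 1) * (b - 1))"
  have large: "int k \<in> S" if "k \<ge> N" for k
  proof -
    obtain s where s: "s \<in> SG A" "s mod b = int k mod b" "s \<le> (b - 1) * (b - 1)"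
      using small_residue[OF fin assms(5) bpos sub, of "int k"] by blast
    have "int k \<ge> s" using s(3) that unfolding N_def by linarith
    then show ?thesis unfolding S_def using SG_large[OF fin assms(5) bpos sub Ab _ s(1) s(2)] by blast
  qed
  have large': "int k \<in> S'" if "k \<ge> N" for k
  proof -
    obtain s where s: "s \<in> SG A'" "s mod b = int k mod b" "s \<le> (b - 1) * (b - 1)"
      using small_residue[OF fin' g' bpos sub', of "int k"] by blast
    have "int k \<ge> s" using s(3) that unfolding N_def by linarith
    then show ?thesis unfolding S'_def using SG_large[OF fin' g' bpos sub' A'0(2) _ s(1) s(2)] by blast
  qed
  have sig0: "sigma0_fps A = Abs_fps (\<lambda>n. if int n \<in> S then 1 else 0)"
    unfolding sigma0_fps_def S_def Tset0 ..
  have sigb: "sigmab_fps A b = Abs_fps (\<lambda>n. if int n \<in> S' then 1 else 0)"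
    unfolding sigmab_fps_def S'_def A'_def Tsetb ..
  show ?thesis
  proof (intro exI conjI allI impI)
    show "expands_rational (sigma0_fps A) (pnum S N) [:1, -1:]"
      unfolding sig0 by (rule expands_gen) (use large in auto)
    show "expands_rational (sigmab_fps A b) (pnum S' N) [:1, -1:]"
      unfolding sigb by (rule expands_gen) (use large' in auto)
    fix h :: nat and x :: complex
    assume hb: "2 * b - 4 \<le> int h"
    assume xa: "x \<noteq> 0 \<and> poly [:1, -1:] x \<noteq> 0 \<and> poly [:1, -1:] (inverse x) \<noteq> 0"
    have x0: "x \<noteq> 0" and x1: "x \<noteq> 1" using xa by auto
    have ix1: "inverse x \<noteq> 1" using x1 by (metis inverse_1 inverse_inverse_eq)
    define H where "H = int h * b"
    have H0: "H \<ge> 0" unfolding H_def using bpos by simp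
    define T where "T = nat H + N"
    have TH: "int T = H + int N" unfolding T_def using H0 by simp
    define W where "W = {- int N..H + int N}"
    have E1: "poly (pnum S N) x / poly [:1, -1:] x
           = (\<Sum>k\<le>T. if int k \<in> S then x ^ k else 0) + x ^ Suc T / (1 - x)"
      by (rule eval_gen) (use large x1 in \<open>auto simp: T_def\<close>)
    have E2: "poly (pnum S' N) (inverse x) / poly [:1, -1:] (inverse x)
           = (\<Sum>k\<le>T. if int k \<in> S' then (inverse x) ^ k else 0) + (inverse x) ^ Suc T / (1 - inverse x)"
      by (rule eval_gen) (use large' ix1 in \<open>auto simp: T_def\<close>)
    have C1: "(\<Sum>k\<le>T. if int k \<in> S then x ^ k else 0) = (\<Sum>n\<in>W. if n \<in> S then x powi n else 0)"
    proof -
      have "(\<Sum>k\<le>T. if int k \<in> S then x ^ k else 0) = (\<Sum>k\<le>T. (\<lambda>n. if n \<in> S then x powi n else 0) (int k))"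
        by (rule sum.cong[OF refl]) simp
      also have "\<dots> = (\<Sum>n\<in>{0..int T}. if n \<in> S then x powi n else 0)" by (rule sum_nat_to_int)
      also have "\<dots> = (\<Sum>n\<in>W. if n \<in> S then x powi n else 0)"
      proof (rule sum.mono_neutral_left)
        show "finite W" unfolding W_def by simp
        show "{0..int T} \<subseteq> W" unfolding W_def TH by auto
        show "\<forall>i\<in>W - {0..int T}. (if i \<in> S then x powi i else 0) = 0"
          using SG_nonneg[OF sub] unfolding W_def TH S_def by fastforce
      qed
      finally show ?thesis .
    qed
    have C2: "x powi H * (\<Sum>k\<le>T. if int k \<in> S' then (inverse x) ^ k else 0)
          = (\<Sum>n\<in>W. if H - n \<in> S' then x powi n else 0)"
    proof -
      have "x powi H * (\<Sum>k\<le>T. if int k \<in> S' then (inverse x) ^ k else 0)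
          = (\<Sum>k\<le>T. (\<lambda>m. if m \<in> S' then x powi (H - m) else 0) (int k))"
        unfolding sum_distrib_left
      proof (rule sum.cong)
        fix k assume "k \<in> {..T}"
        have "x powi H * (inverse x) ^ k = x powi (H - int k)"
          using x0 by (simp add: power_int_diff power_inverse field_simps)
        then show "x powi H * (if int k \<in> S' then (inverse x) ^ k else 0)
             = (\<lambda>m. if m \<in> S' then x powi (H - m) else 0) (int k)" by simp
      qed simp
      also have "\<dots> = (\<Sum>m\<in>{0..int T}. if m \<in> S' then x powi (H - m) else 0)" by (rule sum_nat_to_int)
      also have "\<dots> = (\<Sum>n\<in>{H - int T..H}. if H - n \<in> S' then x powi n else 0)"
        by (rule sum.reindex_bij_witness[where i = "\<lambda>n. H - n" and j = "\<lambda>n. H - n"]) auto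
      also have "\<dots> = (\<Sum>n\<in>W. if H - n \<in> S' then x powi n else 0)"
      proof (rule sum.mono_neutral_left)
        show "finite W" unfolding W_def by simp
        show "{H - int T..H} \<subseteq> W" unfolding W_def TH by auto
        show "\<forall>i\<in>W - {H - int T..H}. (if H - i \<in> S' then x powi i else 0) = 0"
          using SG_nonneg[OF sub'] unfolding W_def TH S'_def by fastforce
      qed
      finally show ?thesis .
    qed
    have C3: "x ^ Suc T / (1 - x) + x powi H * ((inverse x) ^ Suc T / (1 - inverse x))
            = - (\<Sum>n\<in>W. x powi n)"
    proof -
      have g: "(\<Sum>n\<in>W. x powi n) = (x powi (- int N) - x powi (- int N + int (Suc T + N))) / (1 - x)"
      proof -
        have "W = {- int N..- int N + int (Suc T + N) - 1}" unfolding W_def using TH by auto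
        then show ?thesis using geom_powi[OF x0 x1, of "- int N" "Suc T + N"] by simp
      qed
      define P where "P = x powi H"
      define Q where "Q = x ^ N"
      have P0: "P \<noteq> 0" unfolding P_def using x0 by simp
      have Q0: "Q \<noteq> 0" unfolding Q_def using x0 by simp
      have e1: "x ^ Suc T = P * Q * x"
      proof -
        have "x ^ Suc T = x powi (H + int N + 1)" using TH by (metis power_int_of_nat of_nat_Suc add.commute)
        also have "\<dots> = P * Q * x" unfolding P_def Q_def using x0
          by (simp add: power_int_add power_int_add_1)
        finally show ?thesis .
      qed
      have e2: "(inverse x) ^ Suc T = inverse (P * Q * x)" using e1 by (metis power_inverse)
      have e3: "x powi (- int N + int (Suc T + N)) = P * Q * x"
      proof -
        have "- int N + int (Suc T + N) = int (Suc T)" by simp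
        then show ?thesis using e1 by (metis power_int_of_nat)
      qed
      have e4: "x powi (- int N) = inverse Q" unfolding Q_def by (simp add: power_int_minus)
      have nz: "1 - x \<noteq> 0" "x - 1 \<noteq> 0" using x1 by auto
      have e5: "P * (inverse (P * Q * x) / (1 - inverse x)) = - inverse Q / (1 - x)"
      proof -
        have "1 - inverse x = (x - 1) / x" using x0 by (simp add: field_simps)
        then show ?thesis using P0 Q0 x0 nz by (simp add: field_simps)
      qed
      show ?thesis unfolding g e1 e2 e3 e4 P_def[symmetric] e5
        by (simp add: diff_divide_distrib)
    qed
    have pt: "(if n \<in> S then x powi n else 0) + (if H - n \<in> S' then x powi n else 0) - x powi n
            = (if n \<in> sumset h A then x powi n else 0)" for n
    proof -
      have i1: "n \<in> sumset h A \<longleftrightarrow> n \<in> S \<and> H - n \<in> S'"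
        using inclusion[OF fin sub A0 Ab bpos hb, of n] sumset_SG[of n h A]
          sumset_to_reflect[of n h A b]
        unfolding S_def S'_def A'_def H_def by blast
      have i2: "n \<in> S \<or> H - n \<in> S'"
        using cover[OF fin sub A0 Ab bpos assms(5) g'[unfolded A'_def] hb, of n]
        unfolding S_def S'_def A'_def H_def by blast
      show ?thesis using i1 i2 by auto
    qed
    have hW: "sumset h A \<subseteq> W" unfolding W_def H_def using sumset_bounds[OF sub] by fastforce
    have "poly (pnum S N) x / poly [:1, -1:] x
          + x powi H * (poly (pnum S' N) (inverse x) / poly [:1, -1:] (inverse x))
        = (\<Sum>n\<in>W. if n \<in> S then x powi n else 0) + (\<Sum>n\<in>W. if H - n \<in> S' then x powi n else 0)
          - (\<Sum>n\<in>W. x powi n)"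
      unfolding E1 E2 C1[symmetric] C2[symmetric] using C3 by (simp add: algebra_simps)
    also have "\<dots> = (\<Sum>n\<in>W. (if n \<in> S then x powi n else 0) + (if H - n \<in> S' then x powi n else 0) - x powi n)"
      by (simp add: sum.distrib sum_subtractf)
    also have "\<dots> = (\<Sum>n\<in>W. if n \<in> sumset h A then x powi n else 0)" using pt by simp
    also have "\<dots> = (\<Sum>n\<in>sumset h A. x powi n)"
      using hW by (simp add: sum.inter_restrict[symmetric] Int_absorb1 W_def)
    finally show "sigma_set (sumset h A) x
        = poly (pnum S N) x / poly [:1, -1:] x
          + x powi (int h * b) * (poly (pnum S' N) (inverse x) / poly [:1, -1:] (inverse x))"
      unfolding sigma_set_def H_def by simp
  qed
qed

end
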